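(* Let $C=U_d\cdots U_1$ be a depth-$d$ circuit of nearest-neighbor two-qubit Clifford gates on $n$ qubits located at the sites of a $D$-dimensional lattice, with $C_t=U_t\cdots U_1$. Let $b$ be a random error configuration in which each of the $nd$ noise locations $(i,t)$ (qubit $i$, after layer $t$) is independently selected with probability $\gamma$, and let $M_b$ be the set of Pauli operators $C_t^\dagger X_iC_t$, $C_t^\dagger Z_iC_t$ over selected locations $(i,t)$. Define $\Pi_{M_b}=\bigcirc_{P\in M_b}\Pi_P$ where $\Pi_P(\sigma)=\frac12\sigma+\frac12P\sigma P^\dagger$. Partition the lattice into hypercubic sublattices of side length $2d$, let $G$ be the graph on sublattices with adjacency including diagonal neighbors, and let $T_k$ be the set of phaseless Pauli operators whose support is contained within some connected set of $k$ sublattices of $G$ and meets at least $k/2$ sublattices within it. Then there exists a depth threshold $d^*_{local}\le O(\gamma^{-1}3^{2D}+\gamma^{-1}D\log(\gamma^{-1}D))$ such that for $d>d^*_{local}$, $$\mathbf P_b\Big(\bigcup_{s\in T_k}\{\Pi_{M_b}(s)\neq0\}\Big)\le nd\,e^{-k}.$$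
   Context: For a phaseless Pauli $s$, $\Pi_{M_b}(s)=s$ if $s$ commutes with every element of $M_b$ and $\Pi_{M_b}(s)=0$ otherwise. The support of a Pauli operator is the set of qubits on which it acts non-trivially. *)

theory Defs
  imports Complex_Main
begin

type_synonym site = "nat list"

text \<open>The D-dimensional lattice with side L (open boundary); n = L^D qubits.\<close>
definition box :: "nat \<Rightarrow> nat \<Rightarrow> site set" where
  "box D L = {v. length v = D \<and> (\<forall>j<D. v ! j < L)}"

definition nn :: "site \<Rightarrow> site \<Rightarrow> bool" where
  "nn u v \<longleftrightarrow> length u = length v \<and>
     (\<exists>j<length u. (u ! j = Suc (v ! j) \<or> v ! j = Suc (u ! j)) \<and>
                   (\<forall>i<length u. i \<noteq> j \<longrightarrow> u ! i = v ! i))"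

text \<open>A single-qubit phaseless Pauli is (x-bit, z-bit): I=(F,F), X=(T,F), Z=(F,T), Y=(T,T).\<close>
type_synonym p1 = "bool \<times> bool"
type_synonym p2 = "p1 \<times> p1"
type_synonym pauli = "site \<Rightarrow> p1"

definition pauli_on :: "site set \<Rightarrow> pauli \<Rightarrow> bool" where
  "pauli_on V s \<longleftrightarrow> (\<forall>v. v \<notin> V \<longrightarrow> s v = (False, False))"

definition supp :: "pauli \<Rightarrow> site set" where
  "supp s = {v. s v \<noteq> (False, False)}"

definition anticomm1 :: "p1 \<Rightarrow> p1 \<Rightarrow> bool" where
  "anticomm1 p q \<longleftrightarrow> (fst p \<and> snd q) \<noteq> (snd p \<and> fst q)"

definition commute :: "site set \<Rightarrow> pauli \<Rightarrow> pauli \<Rightarrow> bool" where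
  "commute V s p \<longleftrightarrow> even (card {v\<in>V. anticomm1 (s v) (p v)})"

definition pX :: "site \<Rightarrow> pauli" where
  "pX i = (\<lambda>v. if v = i then (True, False) else (False, False))"

definition pZ :: "site \<Rightarrow> pauli" where
  "pZ i = (\<lambda>v. if v = i then (False, True) else (False, False))"

definition add1 :: "p1 \<Rightarrow> p1 \<Rightarrow> p1" where
  "add1 p q = (fst p \<noteq> fst q, snd p \<noteq> snd q)"

definition add2 :: "p2 \<Rightarrow> p2 \<Rightarrow> p2" where
  "add2 p q = (add1 (fst p) (fst q), add1 (snd p) (snd q))"

definition anticomm2 :: "p2 \<Rightarrow> p2 \<Rightarrow> bool" where
  "anticomm2 p q \<longleftrightarrow> anticomm1 (fst p) (fst q) \<noteq> anticomm1 (snd p) (snd q)"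

text \<open>g represents the map P to U^dag P U (up to phase) of a two-qubit Clifford U;
  these are exactly the symplectic linear bijections of F2^4.\<close>
definition clifford2 :: "(p2 \<Rightarrow> p2) \<Rightarrow> bool" where
  "clifford2 g \<longleftrightarrow> bij g \<and> (\<forall>p q. g (add2 p q) = add2 (g p) (g q))
                   \<and> (\<forall>p q. anticomm2 (g p) (g q) = anticomm2 p q)"

type_synonym gate = "site \<times> site \<times> (p2 \<Rightarrow> p2)"
type_synonym layer = "gate list"

definition apply_gate :: "gate \<Rightarrow> pauli \<Rightarrow> pauli" where
  "apply_gate gt s = (case gt of (a, b, g) \<Rightarrow>
      (let r = g (s a, s b) in s(a := fst r, b := snd r)))"

definition heis_layer :: "layer \<Rightarrow> pauli \<Rightarrow> pauli" where
  "heis_layer l s = fold apply_gate l s"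

definition valid_layer :: "site set \<Rightarrow> layer \<Rightarrow> bool" where
  "valid_layer V l \<longleftrightarrow> distinct (concat (map (\<lambda>(a, b, g). [a, b]) l)) \<and>
     (\<forall>(a, b, g) \<in> set l. a \<in> V \<and> b \<in> V \<and> nn a b \<and> clifford2 g)"

definition valid_circuit :: "site set \<Rightarrow> nat \<Rightarrow> (nat \<Rightarrow> layer) \<Rightarrow> bool" where
  "valid_circuit V d U \<longleftrightarrow> (\<forall>t\<in>{1..d}. valid_layer V (U t))"

text \<open>heis U t P = C_t^dag P C_t with C_t = U_t \<dots> U_1 (phaseless).\<close>
fun heis :: "(nat \<Rightarrow> layer) \<Rightarrow> nat \<Rightarrow> pauli \<Rightarrow> pauli" where
  "heis U 0 P = P"
| "heis U (Suc t) P = heis U t (heis_layer (U (Suc t)) P)"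

definition Mset :: "(nat \<Rightarrow> layer) \<Rightarrow> (site \<times> nat) set \<Rightarrow> pauli set" where
  "Mset U B = {heis U t (pX i) | i t. (i, t) \<in> B} \<union> {heis U t (pZ i) | i t. (i, t) \<in> B}"

text \<open>Pi_M(s) for a phaseless Pauli s: s if s commutes with all of M, else 0 (None).\<close>
definition Pi_M :: "site set \<Rightarrow> pauli set \<Rightarrow> pauli \<Rightarrow> pauli option" where
  "Pi_M V M s = (if \<forall>P\<in>M. commute V s P then Some s else None)"

definition locs :: "site set \<Rightarrow> nat \<Rightarrow> (site \<times> nat) set" where
  "locs V d = V \<times> {1..d}"

text \<open>Probability of event E when each location is independently selected with prob. gamma.\<close>
definition noise_prob :: "real \<Rightarrow> site set \<Rightarrow> nat \<Rightarrow> ((site \<times> nat) set \<Rightarrow> bool) \<Rightarrow> real" where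
  "noise_prob \<gamma> V d E = (\<Sum>B\<in>{B. B \<subseteq> locs V d \<and> E B}.
       \<gamma> ^ card B * (1 - \<gamma>) ^ (card (locs V d) - card B))"

definition sub :: "nat \<Rightarrow> site \<Rightarrow> nat list" where
  "sub d v = map (\<lambda>x. x div (2 * d)) v"

definition cube :: "site set \<Rightarrow> nat \<Rightarrow> nat list \<Rightarrow> site set" where
  "cube V d c = {v\<in>V. sub d v = c}"

definition adjG :: "nat list \<Rightarrow> nat list \<Rightarrow> bool" where
  "adjG c c' \<longleftrightarrow> c \<noteq> c' \<and> length c = length c' \<and>
     (\<forall>j<length c. \<bar>int (c ! j) - int (c' ! j)\<bar> \<le> 1)"

definition connected_subs :: "site set \<Rightarrow> nat \<Rightarrow> nat list set \<Rightarrow> bool" where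
  "connected_subs V d S \<longleftrightarrow> S \<subseteq> sub d ` V \<and>
     (\<forall>x\<in>S. \<forall>y\<in>S. (x, y) \<in> {(a, b). a \<in> S \<and> b \<in> S \<and> adjG a b}\<^sup>*)"

definition T_set :: "site set \<Rightarrow> nat \<Rightarrow> nat \<Rightarrow> pauli set" where
  "T_set V d k = {s. pauli_on V s \<and>
     (\<exists>S. connected_subs V d S \<and> card S = k \<and> supp s \<subseteq> \<Union> (cube V d ` S) \<and>
          real (card {c\<in>S. supp s \<inter> cube V d c \<noteq> {}}) \<ge> real k / 2)}"

end

theory Submission
  imports Defs
begin


lemma lists_card_le:
  fixes A :: "nat \<Rightarrow> 'a set"
  assumes "\<And>j. j < D \<Longrightarrow> finite (A j) \<and> card (A j) \<le> m"
  shows "finite {v. length v = D \<and> (\<forall>j<D. v ! j \<in> A j)} \<and>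
         card {v. length v = D \<and> (\<forall>j<D. v ! j \<in> A j)} \<le> m ^ D"
  using assms
proof (induction D arbitrary: A)
  case 0
  have "{v::'a list. length v = 0 \<and> (\<forall>j<0. v ! j \<in> A j)} = {[]}" by auto
  then show ?case by simp
next
  case (Suc D)
  let ?B = "{v. length v = D \<and> (\<forall>j<D. v ! j \<in> A (Suc j))}"
  have IH: "finite ?B \<and> card ?B \<le> m ^ D"
    using Suc.IH[of "\<lambda>j. A (Suc j)"] Suc.prems by auto
  have eq: "{v. length v = Suc D \<and> (\<forall>j<Suc D. v ! j \<in> A j)} = (\<lambda>(x, v). x # v) ` (A 0 \<times> ?B)"
  proof (intro set_eqI iffI)
    fix v assume "v \<in> {v. length v = Suc D \<and> (\<forall>j<Suc D. v ! j \<in> A j)}"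
    then obtain x w where v: "v = x # w" "length w = D" and h: "\<forall>j<Suc D. v ! j \<in> A j"
      by (cases v) auto
    have "x \<in> A 0" using h v by auto
    moreover have "w \<in> ?B"
    proof -
      have "\<forall>j<D. w ! j \<in> A (Suc j)"
      proof (intro allI impI)
        fix j assume "j < D"
        then have "v ! Suc j \<in> A (Suc j)" using h by simp
        then show "w ! j \<in> A (Suc j)" using v by simp
      qed
      then show ?thesis using v by simp
    qed
    ultimately
    show "v \<in> (\<lambda>(x, v). x # v) ` (A 0 \<times> ?B)" using v by auto
  next
    fix v assume "v \<in> (\<lambda>(x, v). x # v) ` (A 0 \<times> ?B)"
    then show "v \<in> {v. length v = Suc D \<and> (\<forall>j<Suc D. v ! j \<in> A j)}"
      by (auto simp: less_Suc_eq_0_disj)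
  qed
  have f0: "finite (A 0)" "card (A 0) \<le> m" using Suc.prems by auto
  have "card ((\<lambda>(x, v). x # v) ` (A 0 \<times> ?B)) \<le> card (A 0 \<times> ?B)"
    using IH f0 by (intro card_image_le) auto
  also have "\<dots> = card (A 0) * card ?B" by (simp add: card_cartesian_product)
  also have "\<dots> \<le> m * m ^ D" using IH f0 by (intro mult_mono) auto
  finally show ?case unfolding eq using IH f0 by auto
qed

definition close :: "nat \<Rightarrow> site \<Rightarrow> site \<Rightarrow> bool" where
  "close r u v \<longleftrightarrow> length u = length v \<and> (\<forall>j<length u. \<bar>int (u ! j) - int (v ! j)\<bar> \<le> int r)"

definition nbh :: "nat \<Rightarrow> site set \<Rightarrow> site set" where
  "nbh r A = {v. \<exists>u\<in>A. close r u v}"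

lemma close_refl: "close r u u" by (simp add: close_def)
lemma close_sym: "close r u v \<Longrightarrow> close r v u" by (auto simp: close_def abs_minus_commute)
lemma close_trans: "close r u v \<Longrightarrow> close r' v w \<Longrightarrow> close (r + r') u w"
  unfolding close_def by (smt (verit) of_nat_add)
lemma close_mono: "close r u v \<Longrightarrow> r \<le> r' \<Longrightarrow> close r' u v"
  unfolding close_def by force
lemma nn_close: "nn u v \<Longrightarrow> close 1 u v"
  unfolding nn_def close_def apply (clarsimp) apply (case_tac "ja = j") apply auto done
lemma nn_neq: "nn u v \<Longrightarrow> u \<noteq> v"
  unfolding nn_def by auto

lemma nbh_mono: "A \<subseteq> B \<Longrightarrow> nbh r A \<subseteq> nbh r B" unfolding nbh_def by auto
lemma nbh_self: "A \<subseteq> nbh r A" unfolding nbh_def using close_refl by auto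
lemma nbh_nbh: "nbh r (nbh r' A) \<subseteq> nbh (r' + r) A"
  unfolding nbh_def using close_trans by blast
lemma nbh_le: "r \<le> r' \<Longrightarrow> nbh r A \<subseteq> nbh r' A"
  unfolding nbh_def using close_mono by blast

definition near :: "nat list \<Rightarrow> nat list \<Rightarrow> bool" where
  "near c c' \<longleftrightarrow> length c = length c' \<and> (\<forall>j<length c. \<bar>int (c ! j) - int (c' ! j)\<bar> \<le> 1)"

lemma near_refl: "near c c" by (simp add: near_def)
lemma near_sym: "near c c' \<Longrightarrow> near c' c" by (auto simp: near_def abs_minus_commute)
lemma adjG_near: "adjG c c' \<Longrightarrow> near c c'" by (simp add: adjG_def near_def)

lemma near_card: "finite {c'. near c c'} \<and> card {c'. near c c'} \<le> 3 ^ length c"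
proof -
  let ?A = "\<lambda>j. {c ! j - 1 .. c ! j + 1}"
  have sub: "{c'. near c c'} \<subseteq> {v. length v = length c \<and> (\<forall>j<length c. v ! j \<in> ?A j)}"
    unfolding near_def by auto
  have "finite {v. length v = length c \<and> (\<forall>j<length c. v ! j \<in> ?A j)} \<and>
     card {v. length v = length c \<and> (\<forall>j<length c. v ! j \<in> ?A j)} \<le> 3 ^ length c"
    by (rule lists_card_le) auto
  then show ?thesis using sub by (meson card_mono finite_subset order_trans)
qed

lemma div_close:
  fixes a b d :: nat
  assumes "d \<ge> 1" "\<bar>int a - int b\<bar> \<le> int d"
  shows "\<bar>int (a div (2*d)) - int (b div (2*d))\<bar> \<le> 1"
proof -
  have k: "\<And>x y::nat. x \<le> y \<Longrightarrow> y \<le> x + d \<Longrightarrow> y div (2*d) \<le> x div (2*d) + 1"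
  proof -
    fix x y :: nat assume "x \<le> y" "y \<le> x + d"
    then have "y \<le> x + 2*d" by simp
    then have "y div (2*d) \<le> (x + 2*d) div (2*d)" by (rule div_le_mono)
    also have "\<dots> = x div (2*d) + 1" using assms(1) by simp
    finally show "y div (2*d) \<le> x div (2*d) + 1" .
  qed
  show ?thesis
  proof (cases "a \<le> b")
    case True
    then have "b \<le> a + d" using assms(2) by linarith
    with k[OF True] have "b div (2*d) \<le> a div (2*d) + 1" by simp
    moreover have "a div (2*d) \<le> b div (2*d)" using True by (rule div_le_mono)
    ultimately show ?thesis by linarith
  next
    case False
    then have "a \<le> b + d" using assms(2) by linarith
    with k[of b a] False have "a div (2*d) \<le> b div (2*d) + 1" by simp
    moreover have "b div (2*d) \<le> a div (2*d)" using False by (simp add: div_le_mono)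
    ultimately show ?thesis by linarith
  qed
qed

lemma close_sub_near: "d \<ge> 1 \<Longrightarrow> close d u v \<Longrightarrow> near (sub d u) (sub d v)"
  unfolding close_def near_def sub_def using div_close by auto

lemma cube_region_card:
  assumes "d \<ge> 1" "length c = D"
  shows "finite {w\<in>box D L. near c (sub d w)} \<and> card {w\<in>box D L. near c (sub d w)} \<le> (6*d) ^ D"
proof -
  let ?A = "\<lambda>j. {2*d*c!j - 2*d ..< 2*d*c!j + 4*d}"
  have sub: "{w\<in>box D L. near c (sub d w)} \<subseteq> {v. length v = D \<and> (\<forall>j<D. v ! j \<in> ?A j)}"
  proof safe
    fix w assume w: "w \<in> box D L" "near c (sub d w)"
    have lw: "length w = D" using w(1) by (simp add: box_def)
    show "length w = D" by fact
    fix j assume j: "j < D"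
    have "\<bar>int (c!j) - int (w!j div (2*d))\<bar> \<le> 1"
      using w(2) j assms lw unfolding near_def sub_def by auto
    then have h1: "w!j div (2*d) \<le> c!j + 1" and h2: "c!j \<le> w!j div (2*d) + 1" by linarith+
    have "w!j mod (2*d) < 2*d" using assms(1) by simp
    then have "w!j < 2*d*(w!j div (2*d) + 1)"
      using div_mult_mod_eq[of "w!j" "2*d"] by (simp add: algebra_simps)
    also have "\<dots> \<le> 2*d*(c!j + 2)" using h1 by (intro mult_le_mono2) simp
    finally have u: "w!j < 2*d*c!j + 4*d" by (simp add: algebra_simps)
    have "2*d*(w!j div (2*d)) \<le> w!j" by (metis div_mult_mod_eq le_add1 mult.commute)
    moreover have "2*d*c!j \<le> 2*d*(w!j div (2*d)) + 2*d" using h2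
      by (metis add_mult_distrib2 mult.right_neutral mult_le_mono2)
    ultimately have "2*d*c!j - 2*d \<le> w!j" by linarith
    with u show "w ! j \<in> ?A j" by simp
  qed
  have "finite {v. length v = D \<and> (\<forall>j<D. v ! j \<in> ?A j)} \<and>
     card {v. length v = D \<and> (\<forall>j<D. v ! j \<in> ?A j)} \<le> (6*d) ^ D"
    by (rule lists_card_le) auto
  then show ?thesis using sub by (meson card_mono finite_subset order_trans)
qed

lemma box_finite: "finite (box D L)"
proof -
  have "finite {v. length v = D \<and> (\<forall>j<D. v ! j \<in> {..<L})} \<and>
     card {v. length v = D \<and> (\<forall>j<D. v ! j \<in> {..<L})} \<le> L ^ D"
    by (rule lists_card_le) auto
  then show ?thesis unfolding box_def by simp
qed

lemma box_nonempty: "L \<ge> 1 \<Longrightarrow> replicate D 0 \<in> box D L"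
  by (simp add: box_def)



abbreviation z1 :: p1 where "z1 \<equiv> (False, False)"
abbreviation z2 :: p2 where "z2 \<equiv> (z1, z1)"

definition ginv :: "gate \<Rightarrow> gate" where
  "ginv x = (case x of (a, b, g) \<Rightarrow> (a, b, inv g))"
definition linv :: "layer \<Rightarrow> layer" where
  "linv l = rev (map ginv l)"
definition pr :: "gate \<Rightarrow> site list" where
  "pr x = (case x of (a, b, g) \<Rightarrow> [a, b])"

lemma gate_inv:
  assumes "a \<noteq> b" "surj g"
  shows "apply_gate (a, b, g) (apply_gate (a, b, inv g) s) = s"
proof -
  have "g (inv g (s a, s b)) = (s a, s b)" using assms(2) by (simp add: surj_f_inv_f)
  then show ?thesis using assms(1)
    by (auto simp: apply_gate_def Let_def fun_eq_iff split: prod.splits)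
qed

lemma layer_inv:
  assumes "\<forall>(a, b, g)\<in>set l. a \<noteq> b \<and> surj g"
  shows "heis_layer l (heis_layer (linv l) s) = s"
  using assms
proof (induction l arbitrary: s)
  case Nil
  then show ?case by (simp add: heis_layer_def linv_def)
next
  case (Cons x xs)
  obtain a b g where x: "x = (a, b, g)" by (cases x) auto
  have h: "a \<noteq> b" "surj g" using Cons.prems x by auto
  have "heis_layer (x # xs) (heis_layer (linv (x # xs)) s) =
        fold apply_gate xs (apply_gate x (apply_gate (ginv x) (fold apply_gate (rev (map ginv xs)) s)))"
    by (simp add: heis_layer_def linv_def)
  also have "apply_gate x (apply_gate (ginv x) (fold apply_gate (rev (map ginv xs)) s)) =
      fold apply_gate (rev (map ginv xs)) s"
    using gate_inv[OF h] by (simp add: x ginv_def)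
  also have "fold apply_gate xs (fold apply_gate (rev (map ginv xs)) s) = s"
    using Cons.IH[of s] Cons.prems by (simp add: heis_layer_def linv_def)
  finally show ?case .
qed

lemma gate_pauli_on:
  assumes "a \<in> V" "b \<in> V" "pauli_on V s"
  shows "pauli_on V (apply_gate (a, b, g) s)"
  using assms by (auto simp: pauli_on_def apply_gate_def Let_def)

lemma layer_pauli_on:
  assumes "\<forall>(a, b, g)\<in>set l. a \<in> V \<and> b \<in> V" "pauli_on V s"
  shows "pauli_on V (heis_layer l s)"
  using assms unfolding heis_layer_def
proof (induction l arbitrary: s)
  case Nil then show ?case by simp
next
  case (Cons x xs)
  obtain a b g where x: "x = (a, b, g)" by (cases x) auto
  then have "pauli_on V (apply_gate x s)" using Cons.prems gate_pauli_on by auto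
  then show ?case using Cons by simp
qed

lemma card_split2:
  assumes "finite V" "a \<in> V" "b \<in> V" "a \<noteq> b"
  shows "card {v\<in>V. Q v} = card {v\<in>V-{a,b}. Q v} + (if Q a then 1 else 0) + (if Q b then 1 else 0)"
proof -
  have e: "{v\<in>V. Q v} = {v\<in>V-{a,b}. Q v} \<union> {v\<in>{a,b}. Q v}" using assms by auto
  have "card {v\<in>V. Q v} = card {v\<in>V-{a,b}. Q v} + card {v\<in>{a,b}. Q v}"
    unfolding e using assms(1) by (intro card_Un_disjoint) auto
  moreover have "card {v\<in>{a,b}. Q v} = (if Q a then 1 else 0) + (if Q b then 1 else 0)"
  proof (cases "Q a"; cases "Q b")
    assume "Q a" "Q b" then have "{v\<in>{a,b}. Q v} = {a,b}" by auto
    then show ?thesis using assms(4) \<open>Q a\<close> \<open>Q b\<close> by simp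
  next
    assume "Q a" "\<not> Q b" then have "{v\<in>{a,b}. Q v} = {a}" by auto
    then show ?thesis using \<open>Q a\<close> \<open>\<not> Q b\<close> by simp
  next
    assume "\<not> Q a" "Q b" then have "{v\<in>{a,b}. Q v} = {b}" by auto
    then show ?thesis using \<open>\<not> Q a\<close> \<open>Q b\<close> by simp
  next
    assume "\<not> Q a" "\<not> Q b" then have "{v\<in>{a,b}. Q v} = {}" by auto
    then show ?thesis using \<open>\<not> Q a\<close> \<open>\<not> Q b\<close> by simp
  qed
  ultimately show ?thesis by simp
qed

lemma gate_commute:
  assumes "finite V" "a \<in> V" "b \<in> V" "a \<noteq> b"
    and g: "\<forall>p q. anticomm2 (g p) (g q) = anticomm2 p q"
  shows "commute V (apply_gate (a, b, g) s) (apply_gate (a, b, g) p) = commute V s p"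
proof -
  define s' where "s' = apply_gate (a, b, g) s"
  define p' where "p' = apply_gate (a, b, g) p"
  have s'a: "(s' a, s' b) = g (s a, s b)" using assms(4) by (simp add: s'_def apply_gate_def Let_def)
  have p'a: "(p' a, p' b) = g (p a, p b)" using assms(4) by (simp add: p'_def apply_gate_def Let_def)
  have out: "\<And>v. v \<notin> {a,b} \<Longrightarrow> s' v = s v \<and> p' v = p v"
    by (simp add: s'_def p'_def apply_gate_def Let_def)
  have ac: "(anticomm1 (s' a) (p' a) \<noteq> anticomm1 (s' b) (p' b)) =
            (anticomm1 (s a) (p a) \<noteq> anticomm1 (s b) (p b))"
    using g[rule_format, of "(s a, s b)" "(p a, p b)"] s'a p'a by (simp add: anticomm2_def) (metis fst_conv snd_conv)
  have same: "{v\<in>V-{a,b}. anticomm1 (s' v) (p' v)} = {v\<in>V-{a,b}. anticomm1 (s v) (p v)}"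
    using out by auto
  show ?thesis
    unfolding s'_def[symmetric] p'_def[symmetric] commute_def
    using card_split2[OF assms(1-4), of "\<lambda>v. anticomm1 (s' v) (p' v)"]
          card_split2[OF assms(1-4), of "\<lambda>v. anticomm1 (s v) (p v)"] same ac
    by auto
qed

lemma layer_commute:
  assumes "finite V" "\<forall>(a, b, g)\<in>set l. a \<in> V \<and> b \<in> V \<and> a \<noteq> b \<and> (\<forall>p q. anticomm2 (g p) (g q) = anticomm2 p q)"
  shows "commute V (heis_layer l s) (heis_layer l p) = commute V s p"
  using assms(2) unfolding heis_layer_def
proof (induction l arbitrary: s p)
  case Nil then show ?case by simp
next
  case (Cons x xs)
  obtain a b g where x: "x = (a, b, g)" by (cases x) auto
  have "commute V (apply_gate x s) (apply_gate x p) = commute V s p"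
    using Cons.prems x gate_commute[OF assms(1)] by auto
  then show ?case using Cons by simp
qed



lemma add2_self: "add2 p p = z2"
  by (simp add: add2_def add1_def)

lemma clif_zero:
  assumes "clifford2 g" shows "g z2 = z2"
proof -
  have "g (add2 z2 z2) = add2 (g z2) (g z2)" using assms by (simp add: clifford2_def)
  moreover have "add2 z2 z2 = z2" by (rule add2_self)
  ultimately show ?thesis by (simp add: add2_self)
qed

lemma clif_inv_zero:
  assumes "clifford2 g" shows "inv g z2 = z2"
proof -
  have "inj g" using assms by (simp add: clifford2_def bij_def)
  then show ?thesis using clif_zero[OF assms] by (metis inv_f_f)
qed

lemma pr_simp[simp]: "pr (a, b, g) = [a, b]" by (simp add: pr_def)

definition tset :: "layer \<Rightarrow> pauli \<Rightarrow> site set" where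
  "tset l s = {v. \<exists>a b g. (a, b, g) \<in> set l \<and> (v = a \<or> v = b) \<and> (s a \<noteq> z1 \<or> s b \<noteq> z1)}"

lemma gate_supp:
  assumes "g z2 = z2"
  shows "supp (apply_gate (a, b, g) s) \<subseteq> supp s \<union> tset [(a, b, g)] s"
proof
  fix v assume v: "v \<in> supp (apply_gate (a, b, g) s)"
  show "v \<in> supp s \<union> tset [(a, b, g)] s"
  proof (cases "v = a \<or> v = b")
    case True
    show ?thesis
    proof (cases "s a = z1 \<and> s b = z1")
      case True
      then have "apply_gate (a, b, g) s v = z1" using assms \<open>v = a \<or> v = b\<close>
        by (auto simp: apply_gate_def Let_def)
      then show ?thesis using v by (simp add: supp_def)
    next
      case False
      then show ?thesis using \<open>v = a \<or> v = b\<close> by (auto simp: tset_def)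
    qed
  next
    case False
    then show ?thesis using v by (auto simp: supp_def apply_gate_def Let_def)
  qed
qed

lemma layer_supp:
  assumes "distinct (concat (map pr l))" "\<forall>(a, b, g)\<in>set l. g z2 = z2"
  shows "supp (fold apply_gate l s) \<subseteq> supp s \<union> tset l s"
  using assms
proof (induction l arbitrary: s)
  case Nil then show ?case by simp
next
  case (Cons x xs)
  obtain a b g where x: "x = (a, b, g)" by (cases x) auto
  define s1 where "s1 = apply_gate x s"
  have d: "distinct (concat (map pr xs))" and nab: "a \<notin> set (concat (map pr xs))" "b \<notin> set (concat (map pr xs))"
    using Cons.prems(1) x by auto
  have IH: "supp (fold apply_gate xs s1) \<subseteq> supp s1 \<union> tset xs s1"
    using Cons.IH[OF d] Cons.prems(2) by auto
  have g0: "g z2 = z2" using Cons.prems(2) x by auto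
  have s1: "supp s1 \<subseteq> supp s \<union> tset (x # xs) s"
    using gate_supp[of g a b s, OF g0] x unfolding s1_def tset_def by auto
  have same: "\<And>a' b' g'. (a', b', g') \<in> set xs \<Longrightarrow> s1 a' = s a' \<and> s1 b' = s b'"
  proof -
    fix a' b' g' assume "(a', b', g') \<in> set xs"
    then have "a' \<in> set (concat (map pr xs))" "b' \<in> set (concat (map pr xs))"
      by force+
    then have "a' \<noteq> a" "a' \<noteq> b" "b' \<noteq> a" "b' \<noteq> b" using nab by auto
    then show "s1 a' = s a' \<and> s1 b' = s b'" by (simp add: s1_def x apply_gate_def Let_def)
  qed
  have t: "tset xs s1 \<subseteq> tset (x # xs) s"
    unfolding tset_def using same by fastforce
  show ?case using IH s1 t by (simp add: s1_def) blast
qed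

lemma tset_nbh:
  assumes "\<forall>(a, b, g)\<in>set l. close 1 a b"
  shows "tset l s \<subseteq> nbh 1 (supp s)"
proof
  fix v assume "v \<in> tset l s"
  then obtain a b g where h: "(a, b, g) \<in> set l" "v = a \<or> v = b" "s a \<noteq> z1 \<or> s b \<noteq> z1"
    unfolding tset_def by blast
  have c: "close 1 a b" using h(1) assms by fastforce
  have c2: "close 1 b a" using close_sym[OF c] .
  have "a \<in> supp s \<or> b \<in> supp s" using h(3) by (simp add: supp_def)
  then show "v \<in> nbh 1 (supp s)"
  proof
    assume "a \<in> supp s"
    then show ?thesis using h(2) c close_refl[of 1 a] unfolding nbh_def by blast
  next
    assume "b \<in> supp s"
    then show ?thesis using h(2) c2 close_refl[of 1 b] unfolding nbh_def by blast
  qed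
qed

lemma layer_nbh:
  assumes "distinct (concat (map pr l))" "\<forall>(a, b, g)\<in>set l. g z2 = z2 \<and> close 1 a b"
  shows "supp (heis_layer l s) \<subseteq> nbh 1 (supp s)"
proof -
  have a1: "\<forall>(a, b, g)\<in>set l. g z2 = z2" using assms(2) by fastforce
  have a2: "\<forall>(a, b, g)\<in>set l. close 1 a b" using assms(2) by fastforce
  have "supp (heis_layer l s) \<subseteq> supp s \<union> tset l s"
    unfolding heis_layer_def using assms(1) a1 by (rule layer_supp)
  moreover have "tset l s \<subseteq> nbh 1 (supp s)" using a2 by (rule tset_nbh)
  moreover have "supp s \<subseteq> nbh 1 (supp s)" by (rule nbh_self)
  ultimately show ?thesis by blast
qed

lemma pr_ginv: "pr (ginv x) = pr x"
  by (cases x) (auto simp: pr_def ginv_def)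

lemma valid_layer_props:
  assumes "valid_layer V l"
  shows "distinct (concat (map pr l))"
    and "\<forall>(a, b, g)\<in>set l. a \<in> V \<and> b \<in> V \<and> a \<noteq> b \<and> close 1 a b \<and> clifford2 g"
proof -
  have e: "map pr l = map (\<lambda>(a, b, g). [a, b]) l" by (auto simp: pr_def)
  have "distinct (concat (map (\<lambda>(a, b, g). [a, b]) l))" using assms by (simp add: valid_layer_def)
  then show "distinct (concat (map pr l))" by (metis e)
  show "\<forall>(a, b, g)\<in>set l. a \<in> V \<and> b \<in> V \<and> a \<noteq> b \<and> close 1 a b \<and> clifford2 g"
    using assms nn_close nn_neq by (fastforce simp: valid_layer_def)
qed

lemma valid_layer_inv:
  assumes "valid_layer V l"
  shows "distinct (concat (map pr (linv l)))"
    and "\<forall>(a, b, g)\<in>set (linv l). a \<in> V \<and> b \<in> V \<and> g z2 = z2 \<and> close 1 a b"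
proof -
  have "map pr (linv l) = rev (map pr l)" by (simp add: linv_def rev_map comp_def pr_ginv)
  then show "distinct (concat (map pr (linv l)))" using valid_layer_props(1)[OF assms] by simp
  show "\<forall>(a, b, g)\<in>set (linv l). a \<in> V \<and> b \<in> V \<and> g z2 = z2 \<and> close 1 a b"
  proof (intro ballI, clarify)
    fix a b g' assume "(a, b, g') \<in> set (linv l)"
    then obtain g where h: "(a, b, g) \<in> set l" "g' = inv g" by (auto simp: linv_def ginv_def)
    with valid_layer_props(2)[OF assms] have "a \<in> V" "b \<in> V" "close 1 a b" "clifford2 g" by auto
    then show "a \<in> V \<and> b \<in> V \<and> g' z2 = z2 \<and> close 1 a b"
      using clif_inv_zero h(2) by auto
  qed
qed

fun rr :: "(nat \<Rightarrow> layer) \<Rightarrow> nat \<Rightarrow> pauli \<Rightarrow> pauli" where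
  "rr U 0 s = s"
| "rr U (Suc t) s = heis_layer (linv (U (Suc t))) (rr U t s)"

lemma heis_rr:
  assumes "\<And>j. 1 \<le> j \<Longrightarrow> j \<le> t \<Longrightarrow> valid_layer V (U j)"
  shows "heis U t (rr U t s) = s"
  using assms
proof (induction t)
  case 0 then show ?case by simp
next
  case (Suc t)
  have v: "valid_layer V (U (Suc t))" using Suc.prems by auto
  have "\<forall>(a, b, g)\<in>set (U (Suc t)). a \<noteq> b \<and> surj g"
    using valid_layer_props(2)[OF v] by (fastforce simp: clifford2_def bij_def)
  then have "heis_layer (U (Suc t)) (heis_layer (linv (U (Suc t))) (rr U t s)) = rr U t s"
    by (rule layer_inv)
  then show ?case using Suc by simp
qed

lemma rr_pauli_on:
  assumes "\<And>j. 1 \<le> j \<Longrightarrow> j \<le> t \<Longrightarrow> valid_layer V (U j)" "pauli_on V s"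
  shows "pauli_on V (rr U t s)"
  using assms
proof (induction t)
  case 0 then show ?case by simp
next
  case (Suc t)
  have v: "valid_layer V (U (Suc t))" using Suc.prems by auto
  have "\<forall>(a, b, g)\<in>set (linv (U (Suc t))). a \<in> V \<and> b \<in> V"
    using valid_layer_inv(2)[OF v] by fastforce
  then show ?case using Suc layer_pauli_on by simp
qed

lemma rr_supp:
  assumes "\<And>j. 1 \<le> j \<Longrightarrow> j \<le> t \<Longrightarrow> valid_layer V (U j)"
  shows "supp (rr U t s) \<subseteq> nbh t (supp s)"
  using assms
proof (induction t)
  case 0 then show ?case using nbh_self by simp
next
  case (Suc t)
  have v: "valid_layer V (U (Suc t))" using Suc.prems by auto
  have "supp (rr U (Suc t) s) \<subseteq> nbh 1 (supp (rr U t s))"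
  proof (simp only: rr.simps, rule layer_nbh)
    show "distinct (concat (map pr (linv (U (Suc t)))))" using valid_layer_inv(1)[OF v] .
    show "\<forall>(a, b, g)\<in>set (linv (U (Suc t))). g z2 = z2 \<and> close 1 a b"
      using valid_layer_inv(2)[OF v] by fastforce
  qed
  also have "\<dots> \<subseteq> nbh 1 (nbh t (supp s))" using Suc by (intro nbh_mono) auto
  also have "\<dots> \<subseteq> nbh (Suc t) (supp s)" using nbh_nbh[of 1 t "supp s"] by simp
  finally show ?case .
qed

lemma heis_supp:
  assumes "\<And>j. 1 \<le> j \<Longrightarrow> j \<le> t \<Longrightarrow> valid_layer V (U j)"
  shows "supp (heis U t P) \<subseteq> nbh t (supp P)"
  using assms
proof (induction t arbitrary: P)
  case 0 then show ?case using nbh_self by simp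
next
  case (Suc t)
  have v: "valid_layer V (U (Suc t))" using Suc.prems by auto
  have l: "supp (heis_layer (U (Suc t)) P) \<subseteq> nbh 1 (supp P)"
    using valid_layer_props[OF v] clif_zero by (intro layer_nbh) fastforce+
  have "supp (heis U (Suc t) P) \<subseteq> nbh t (supp (heis_layer (U (Suc t)) P))"
    using Suc by simp
  also have "\<dots> \<subseteq> nbh t (nbh 1 (supp P))" using l by (rule nbh_mono)
  also have "\<dots> \<subseteq> nbh (Suc t) (supp P)" using nbh_nbh[of t 1] by simp
  finally show ?case .
qed

lemma heis_commute:
  assumes "finite V" "\<And>j. 1 \<le> j \<Longrightarrow> j \<le> t \<Longrightarrow> valid_layer V (U j)"
  shows "commute V (heis U t a) (heis U t b) = commute V a b"
  using assms(2)
proof (induction t arbitrary: a b)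
  case 0 then show ?case by simp
next
  case (Suc t)
  have v: "valid_layer V (U (Suc t))" using Suc.prems by auto
  have "\<forall>(a, b, g)\<in>set (U (Suc t)). a \<in> V \<and> b \<in> V \<and> a \<noteq> b \<and> (\<forall>p q. anticomm2 (g p) (g q) = anticomm2 p q)"
    using valid_layer_props(2)[OF v] by (fastforce simp: clifford2_def)
  then show ?case using Suc layer_commute[OF assms(1)] by simp
qed



lemma locs_finite: "finite V \<Longrightarrow> finite (locs V d)"
  by (simp add: locs_def)

lemma binom_pow:
  fixes a b :: real
  assumes "finite A"
  shows "(\<Sum>B\<in>Pow A. a ^ card B * b ^ (card A - card B)) = (a + b) ^ card A"
proof -
  have "(a + b) ^ card A = (\<Prod>x\<in>A. a + b)" by simp
  also have "\<dots> = (\<Sum>X\<in>Pow A. (\<Prod>x\<in>X. a) * (\<Prod>x\<in>A-X. b))"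
    using prod_add[OF assms, of "\<lambda>_. a" "\<lambda>_. b"] by simp
  also have "\<dots> = (\<Sum>B\<in>Pow A. a ^ card B * b ^ (card A - card B))"
  proof (rule sum.cong)
    fix X assume "X \<in> Pow A"
    then have "card (A - X) = card A - card X" using assms
      by (simp add: card_Diff_subset finite_subset)
    then show "(\<Prod>x\<in>X. a) * (\<Prod>x\<in>A-X. b) = a ^ card X * b ^ (card A - card X)" by simp
  qed simp
  finally show ?thesis by simp
qed

lemma noise_prob_alt:
  assumes "finite V"
  shows "noise_prob \<gamma> V d E = (\<Sum>B\<in>Pow (locs V d). if E B then \<gamma> ^ card B * (1 - \<gamma>) ^ (card (locs V d) - card B) else 0)"
proof -
  have "{B. B \<subseteq> locs V d \<and> E B} = {B\<in>Pow (locs V d). E B}" by auto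
  then have "noise_prob \<gamma> V d E = (\<Sum>B\<in>{B\<in>Pow (locs V d). E B}. \<gamma> ^ card B * (1 - \<gamma>) ^ (card (locs V d) - card B))"
    unfolding noise_prob_def by simp
  also have "\<dots> = (\<Sum>B\<in>Pow (locs V d). if E B then \<gamma> ^ card B * (1 - \<gamma>) ^ (card (locs V d) - card B) else 0)"
    by (rule sum.inter_filter) (simp add: locs_finite[OF assms])
  finally show ?thesis .
qed

lemma noise_prob_union:
  assumes "finite V" "finite I" "0 \<le> \<gamma>" "\<gamma> \<le> 1"
    and h: "\<And>B. B \<subseteq> locs V d \<Longrightarrow> E B \<Longrightarrow> \<exists>i\<in>I. F i B"
  shows "noise_prob \<gamma> V d E \<le> (\<Sum>i\<in>I. noise_prob \<gamma> V d (F i))"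
proof -
  let ?w = "\<lambda>B. \<gamma> ^ card B * (1 - \<gamma>) ^ (card (locs V d) - card B)"
  have w0: "\<And>B. ?w B \<ge> 0" using assms(3,4) by simp
  have "noise_prob \<gamma> V d E = (\<Sum>B\<in>Pow (locs V d). if E B then ?w B else 0)" by (rule noise_prob_alt[OF assms(1)])
  also have "\<dots> \<le> (\<Sum>B\<in>Pow (locs V d). \<Sum>i\<in>I. if F i B then ?w B else 0)"
  proof (rule sum_mono)
    fix B assume B: "B \<in> Pow (locs V d)"
    show "(if E B then ?w B else 0) \<le> (\<Sum>i\<in>I. if F i B then ?w B else 0)"
    proof (cases "E B")
      case True
      then obtain i where i: "i \<in> I" "F i B" using h B by auto
      have "(if F i B then ?w B else 0) \<le> (\<Sum>i\<in>I. if F i B then ?w B else 0)"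
        using assms(2) i(1) w0 by (intro member_le_sum) auto
      then show ?thesis using True i by simp
    next
      case False
      have "0 \<le> (\<Sum>i\<in>I. if F i B then ?w B else 0)"
        apply (rule sum_nonneg) using w0[of B] by simp
      then show ?thesis using False by simp
    qed
  qed
  also have "\<dots> = (\<Sum>i\<in>I. \<Sum>B\<in>Pow (locs V d). if F i B then ?w B else 0)"
    by (rule sum.swap)
  also have "\<dots> = (\<Sum>i\<in>I. noise_prob \<gamma> V d (F i))"
    by (simp add: noise_prob_alt[OF assms(1)])
  finally show ?thesis .
qed

lemma noise_prob_le1:
  assumes "finite V" "0 \<le> \<gamma>" "\<gamma> \<le> 1"
  shows "noise_prob \<gamma> V d E \<le> 1"
proof -
  let ?w = "\<lambda>B. \<gamma> ^ card B * (1 - \<gamma>) ^ (card (locs V d) - card B)"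
  have "noise_prob \<gamma> V d E \<le> (\<Sum>B\<in>Pow (locs V d). ?w B)"
    unfolding noise_prob_def using assms locs_finite[OF assms(1)]
    by (intro sum_mono2) auto
  also have "\<dots> = 1" using binom_pow[OF locs_finite[OF assms(1)], of \<gamma> "1 - \<gamma>"] by simp
  finally show ?thesis .
qed

lemma noise_prob_avoid:
  assumes "finite V" "F \<subseteq> locs V d"
  shows "noise_prob \<gamma> V d (\<lambda>B. B \<inter> F = {}) = (1 - \<gamma>) ^ card F"
proof -
  let ?L = "locs V d"
  have fL: "finite ?L" using locs_finite[OF assms(1)] .
  have fF: "finite F" using fL assms(2) finite_subset by auto
  have cL: "card ?L = card F + card (?L - F)"
    using fL assms(2) by (metis card_Diff_subset card_mono fF le_add_diff_inverse)
  have e: "{B. B \<subseteq> ?L \<and> B \<inter> F = {}} = Pow (?L - F)" by auto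
  have "noise_prob \<gamma> V d (\<lambda>B. B \<inter> F = {}) =
      (\<Sum>B\<in>Pow (?L - F). \<gamma> ^ card B * (1 - \<gamma>) ^ (card ?L - card B))"
    unfolding noise_prob_def e ..
  also have "\<dots> = (\<Sum>B\<in>Pow (?L - F). (1 - \<gamma>) ^ card F * (\<gamma> ^ card B * (1 - \<gamma>) ^ (card (?L - F) - card B)))"
  proof (rule sum.cong)
    fix B assume "B \<in> Pow (?L - F)"
    then have "card B \<le> card (?L - F)" using fL by (simp add: card_mono)
    then have "card ?L - card B = card F + (card (?L - F) - card B)" using cL by simp
    then show "\<gamma> ^ card B * (1 - \<gamma>) ^ (card ?L - card B) =
        (1 - \<gamma>) ^ card F * (\<gamma> ^ card B * (1 - \<gamma>) ^ (card (?L - F) - card B))"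
      by (simp add: power_add)
  qed simp
  also have "\<dots> = (1 - \<gamma>) ^ card F * (\<gamma> + (1 - \<gamma>)) ^ card (?L - F)"
    using binom_pow[of "?L - F" \<gamma> "1 - \<gamma>"] fL by (simp add: sum_distrib_left[symmetric])
  finally show ?thesis by simp
qed

definition PS :: "site set \<Rightarrow> pauli set" where
  "PS R = {s. pauli_on R s}"

lemma UNIV_p1: "(UNIV :: p1 set) = {(False, False), (False, True), (True, False), (True, True)}"
  by auto

lemma supp_sub: "pauli_on R s \<Longrightarrow> supp s \<subseteq> R"
  by (auto simp: pauli_on_def supp_def)

lemma PS_sum:
  fixes z :: real
  assumes "finite R"
  shows "finite (PS R) \<and> (\<Sum>s\<in>PS R. z ^ card (supp s)) = (1 + 3 * z) ^ card R"
  using assms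
proof (induction R rule: finite_induct)
  case empty
  have "PS {} = {\<lambda>_. z1}" by (auto simp: PS_def pauli_on_def)
  moreover have "supp (\<lambda>_. z1) = {}" by (simp add: supp_def)
  ultimately show ?case by simp
next
  case (insert v R)
  let ?f = "\<lambda>(p::p1, s::pauli). s(v := p)"
  have e: "PS (insert v R) = ?f ` (UNIV \<times> PS R)"
  proof (intro set_eqI iffI)
    fix s' assume "s' \<in> PS (insert v R)"
    then have "s'(v := z1) \<in> PS R" by (auto simp: PS_def pauli_on_def)
    moreover have "s' = ?f (s' v, s'(v := z1))" by simp
    ultimately show "s' \<in> ?f ` (UNIV \<times> PS R)" by blast
  next
    fix s' assume "s' \<in> ?f ` (UNIV \<times> PS R)"
    then show "s' \<in> PS (insert v R)" by (auto simp: PS_def pauli_on_def)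
  qed
  have inj: "inj_on ?f (UNIV \<times> PS R)"
  proof (rule inj_onI, clarify)
    fix p s p' s' assume h: "s \<in> PS R" "s' \<in> PS R" "s(v := p) = s'(v := p')"
    have "s v = z1" "s' v = z1" using h(1,2) insert.hyps(2) by (auto simp: PS_def pauli_on_def)
    then show "p = p' \<and> s = s'" using h(3) by (metis fun_upd_idem fun_upd_same fun_upd_upd)
  qed
  have fin: "finite (PS R)" using insert.IH by simp
  have cs: "\<And>p s. s \<in> PS R \<Longrightarrow> card (supp (s(v := p))) = card (supp s) + (if p = z1 then 0 else 1)"
  proof -
    fix p s assume s: "s \<in> PS R"
    have sv: "s v = z1" using s insert.hyps(2) by (auto simp: PS_def pauli_on_def)
    have fs: "finite (supp s)" using supp_sub[of R s] s insert.hyps(1) finite_subset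
      by (auto simp: PS_def)
    have vs: "v \<notin> supp s" using sv by (simp add: supp_def)
    show "card (supp (s(v := p))) = card (supp s) + (if p = z1 then 0 else 1)"
    proof (cases "p = z1")
      case True
      then have "supp (s(v := p)) = supp s" using sv by (auto simp: supp_def)
      then show ?thesis using True by simp
    next
      case False
      then have "supp (s(v := p)) = insert v (supp s)" by (auto simp: supp_def)
      then show ?thesis using False fs vs by simp
    qed
  qed
  have "(\<Sum>s'\<in>PS (insert v R). z ^ card (supp s')) = (\<Sum>x\<in>UNIV \<times> PS R. z ^ card (supp (?f x)))"
    unfolding e sum.reindex[OF inj] comp_def
    apply (rule sum.cong[OF refl]) apply (case_tac x) apply simp done
  also have "\<dots> = (\<Sum>x\<in>UNIV \<times> PS R. (\<lambda>(p, s). z ^ card (supp (s(v := p)))) x)"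
    apply (rule sum.cong[OF refl]) apply (case_tac x) apply simp done
  also have "\<dots> = (\<Sum>p\<in>UNIV. \<Sum>s\<in>PS R. z ^ card (supp (s(v := p))))"
    by (rule sum.cartesian_product[symmetric])
  also have "\<dots> = (\<Sum>p\<in>UNIV. \<Sum>s\<in>PS R. (if p = z1 then 1 else z) * z ^ card (supp s))"
    by (intro sum.cong refl) (simp add: cs power_add)
  also have "\<dots> = (\<Sum>p\<in>UNIV. (if p = z1 then 1 else z) * (1 + 3 * z) ^ card R)"
    using insert.IH by (simp add: sum_distrib_left[symmetric])
  also have "\<dots> = (1 + 3 * z) * (1 + 3 * z) ^ card R"
    unfolding UNIV_p1 by (simp add: algebra_simps)
  also have "\<dots> = (1 + 3 * z) ^ card (insert v R)" using insert.hyps by simp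
  finally show ?case using e fin by simp
qed

lemma tilt_sum:
  fixes x phi :: real
  assumes "finite R" "A \<subseteq> PS R" "0 \<le> x" "1 \<le> phi"
    and h: "\<And>s. s \<in> A \<Longrightarrow> k \<le> K * card (supp s)"
  shows "(\<Sum>s\<in>A. x ^ card (supp s)) \<le> (1 + 3 * (x * phi ^ K)) ^ card R / phi ^ k"
proof -
  have fin: "finite (PS R)" using PS_sum[OF assms(1)] by simp
  have pt: "\<And>s. s \<in> A \<Longrightarrow> x ^ card (supp s) \<le> (x * phi ^ K) ^ card (supp s) / phi ^ k"
  proof -
    fix s assume s: "s \<in> A"
    have "phi ^ k \<le> phi ^ (K * card (supp s))" by (rule power_increasing[OF h[OF s] assms(4)])
    also have "\<dots> = (phi ^ K) ^ card (supp s)" by (simp add: power_mult)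
    finally have "phi ^ k \<le> (phi ^ K) ^ card (supp s)" .
    then have "x ^ card (supp s) * phi ^ k \<le> x ^ card (supp s) * (phi ^ K) ^ card (supp s)"
      using assms(3) by (intro mult_left_mono) auto
    then show "x ^ card (supp s) \<le> (x * phi ^ K) ^ card (supp s) / phi ^ k"
      using assms(4) by (simp add: field_simps power_mult_distrib)
  qed
  have "(\<Sum>s\<in>A. x ^ card (supp s)) \<le> (\<Sum>s\<in>A. (x * phi ^ K) ^ card (supp s) / phi ^ k)"
    using pt by (rule sum_mono)
  also have "\<dots> \<le> (\<Sum>s\<in>PS R. (x * phi ^ K) ^ card (supp s) / phi ^ k)"
    using fin assms by (intro sum_mono2) auto
  also have "\<dots> = (\<Sum>s\<in>PS R. (x * phi ^ K) ^ card (supp s)) / phi ^ k"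
    by (simp add: sum_divide_distrib)
  also have "\<dots> = (1 + 3 * (x * phi ^ K)) ^ card R / phi ^ k"
    using PS_sum[OF assms(1)] by simp
  finally show ?thesis .
qed



definition walks :: "nat list set \<Rightarrow> nat \<Rightarrow> nat list list set" where
  "walks C0 m = {W. length W = Suc m \<and> hd W \<in> C0 \<and> successively near W}"

lemma succ_near_len: "successively near W \<Longrightarrow> x \<in> set W \<Longrightarrow> length x = length (hd W)"
proof (induction W rule: induct_list012)
  case 1 then show ?case by simp
next
  case (2 x) then show ?case by simp
next
  case (3 x y zs)
  then have "near x y" "successively near (y # zs)" by auto
  then show ?case using 3 by (auto simp: near_def)
qed

lemma walks_card:
  assumes "finite C0" "\<forall>c\<in>C0. length c = D"
  shows "finite (walks C0 m) \<and> card (walks C0 m) \<le> card C0 * (3 ^ D) ^ m"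
proof (induction m)
  case 0
  have "walks C0 0 = (\<lambda>c. [c]) ` C0"
  proof (intro set_eqI iffI)
    fix W assume "W \<in> walks C0 0"
    then show "W \<in> (\<lambda>c. [c]) ` C0" unfolding walks_def by (auto simp: length_Suc_conv)
  next
    fix W assume "W \<in> (\<lambda>c. [c]) ` C0"
    then show "W \<in> walks C0 0" by (auto simp: walks_def)
  qed
  then show ?case using assms(1) by (simp add: card_image_le)
next
  case (Suc m)
  let ?N = "\<lambda>W. (\<lambda>y. W @ [y]) ` {y. near (last W) y}"
  have sub: "walks C0 (Suc m) \<subseteq> (\<Union>W\<in>walks C0 m. ?N W)"
  proof
    fix W' assume W': "W' \<in> walks C0 (Suc m)"
    then have l: "length W' = Suc (Suc m)" by (simp add: walks_def)
    define W where "W = butlast W'"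
    define x where "x = last W'"
    have ne: "W' \<noteq> []" using l by auto
    have W'eq: "W' = W @ [x]" using ne unfolding W_def x_def by simp
    have lW: "length W = Suc m" using l by (simp add: W_def)
    have hW: "hd W' = hd W" using lW unfolding W'eq by (cases W) auto
    have sW: "successively near (W @ [x])" using W' unfolding W'eq walks_def by simp
    then have "successively near W" "near (last W) x"
      using lW unfolding successively_append_iff by auto
    then have "W \<in> walks C0 m" "near (last W) x"
      using W' lW hW unfolding W'eq walks_def by auto
    then show "W' \<in> (\<Union>W\<in>walks C0 m. ?N W)" unfolding W'eq by blast
  qed
  have fN: "\<And>W. W \<in> walks C0 m \<Longrightarrow> finite (?N W) \<and> card (?N W) \<le> 3 ^ D"
  proof -
    fix W assume W: "W \<in> walks C0 m"
    then have "W \<noteq> []" by (auto simp: walks_def)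
    then have "last W \<in> set W" by simp
    then have "length (last W) = D" using succ_near_len[of W "last W"] W assms(2)
      by (auto simp: walks_def)
    then have "finite {y. near (last W) y} \<and> card {y. near (last W) y} \<le> 3 ^ D"
      using near_card[of "last W"] by simp
    then show "finite (?N W) \<and> card (?N W) \<le> 3 ^ D"
      by (meson card_image_le finite_imageI order_trans)
  qed
  have fU: "finite (\<Union>W\<in>walks C0 m. ?N W)" using Suc fN by auto
  have "card (walks C0 (Suc m)) \<le> card (\<Union>W\<in>walks C0 m. ?N W)"
    using sub fU by (rule card_mono[rotated])
  also have "\<dots> \<le> (\<Sum>W\<in>walks C0 m. card (?N W))" using Suc by (intro card_UN_le) simp
  also have "\<dots> \<le> (\<Sum>W\<in>walks C0 m. 3 ^ D)" using fN by (intro sum_mono) auto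
  also have "\<dots> = card (walks C0 m) * 3 ^ D" by simp
  also have "\<dots> \<le> card C0 * (3 ^ D) ^ m * 3 ^ D" using Suc by simp
  also have "\<dots> = card C0 * (3 ^ D) ^ Suc m" by simp
  finally show ?case using sub fU finite_subset by blast
qed

lemma exit_edge:
  assumes "(x, z) \<in> R\<^sup>*" "x \<in> X" "z \<notin> X"
  shows "\<exists>a b. (a, b) \<in> R \<and> a \<in> X \<and> b \<notin> X"
  using assms
proof (induction rule: rtrancl_induct)
  case base then show ?case by simp
next
  case (step y z)
  show ?case
  proof (cases "y \<in> X")
    case True then show ?thesis using step by blast
  next
    case False then show ?thesis using step by blast
  qed
qed

lemma walk_grow:
  assumes "finite S" "r \<in> S" "\<forall>y\<in>S. (r, y) \<in> Rel\<^sup>*"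
    and rel: "\<And>a b. (a, b) \<in> Rel \<Longrightarrow> a \<in> S \<and> b \<in> S \<and> near a b \<and> near b a"
  shows "m < card S \<Longrightarrow> \<exists>W. W \<noteq> [] \<and> hd W = r \<and> set W \<subseteq> S \<and> card (set W) = Suc m
            \<and> length W \<le> 2 * m + 1 \<and> successively near W"
proof (induction m)
  case 0
  show ?case using assms(2) by (intro exI[of _ "[r]"]) auto
next
  case (Suc m)
  then obtain W where W: "W \<noteq> []" "hd W = r" "set W \<subseteq> S" "card (set W) = Suc m"
      "length W \<le> 2 * m + 1" "successively near W" by auto
  have "set W \<noteq> S" using W(4) Suc.prems by auto
  then obtain z where z: "z \<in> S" "z \<notin> set W" using W(3) by blast
  have "r \<in> set W" using W(1,2) by (metis list.set_sel(1))
  then obtain a b where ab: "(a, b) \<in> Rel" "a \<in> set W" "b \<notin> set W"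
    using exit_edge[of r z Rel "set W"] assms(3) z by auto
  have ab2: "a \<in> S" "b \<in> S" "near a b" "near b a" using rel[OF ab(1)] by auto
  obtain W1 W2 where sp: "W = W1 @ a # W2" using split_list[OF ab(2)] by blast
  define W' where "W' = W1 @ a # b # a # W2"
  have "hd W' = r" using W(2) sp unfolding W'_def by (cases W1) auto
  moreover have "set W' = insert b (set W)" using sp unfolding W'_def by auto
  moreover have "length W' = length W + 2" using sp unfolding W'_def by simp
  moreover have "successively near W'"
  proof -
    have s1: "successively near W1" "successively near (a # W2)" "W1 = [] \<or> near (last W1) a"
      using W(6) sp successively_append_iff[of near W1 "a # W2"] by auto
    have "successively near (a # b # a # W2)" using s1(2) ab2(3,4) by simp
    then show ?thesis unfolding W'_def using s1 successively_append_iff[of near W1 "a # b # a # W2"] by auto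
  qed
  ultimately show ?case using W ab(3) ab2(2) assms(1) finite_subset
    by (intro exI[of _ W']) (auto simp: card_insert_if)
qed

lemma walk_cover:
  assumes "finite S" "r \<in> S" "\<forall>y\<in>S. (r, y) \<in> Rel\<^sup>*"
    and rel: "\<And>a b. (a, b) \<in> Rel \<Longrightarrow> a \<in> S \<and> b \<in> S \<and> near a b \<and> near b a"
  shows "\<exists>W. W \<noteq> [] \<and> hd W = r \<and> set W = S \<and> length W \<le> 2 * card S - 1 \<and> successively near W"
proof -
  have "card S > 0" using assms(1,2) card_gt_0_iff by blast
  then obtain W where W: "W \<noteq> []" "hd W = r" "set W \<subseteq> S" "card (set W) = Suc (card S - 1)"
      "length W \<le> 2 * (card S - 1) + 1" "successively near W"
    using walk_grow[OF assms, of "card S - 1"] by auto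
  have "set W = S" using W(3,4) assms(1) \<open>card S > 0\<close> by (simp add: card_subset_eq)
  then show ?thesis using W \<open>card S > 0\<close> by (intro exI[of _ W]) auto
qed

lemma conn_walk:
  assumes "connected_subs V d S" "card S = k" "k \<ge> 1" "finite V"
  shows "\<exists>W\<in>walks (sub d ` V) (2 * (k - 1)). set W = S"
proof -
  have fS: "finite S" using assms(2,3) card_ge_0_finite by (metis card.infinite not_one_le_zero)
  have "S \<noteq> {}" using assms(2,3) by auto
  then obtain r where r: "r \<in> S" by blast
  let ?Rel = "{(a, b). a \<in> S \<and> b \<in> S \<and> adjG a b}"
  have c: "\<forall>y\<in>S. (r, y) \<in> ?Rel\<^sup>*" using assms(1) r by (simp add: connected_subs_def)
  have rel: "\<And>a b. (a, b) \<in> ?Rel \<Longrightarrow> a \<in> S \<and> b \<in> S \<and> near a b \<and> near b a"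
    using adjG_near near_sym by blast
  obtain W where W: "W \<noteq> []" "hd W = r" "set W = S" "length W \<le> 2 * card S - 1" "successively near W"
    using walk_cover[OF fS r c rel] by blast
  define W' where "W' = W @ replicate (2 * k - 1 - length W) (last W)"
  have "length W' = Suc (2 * (k - 1))" using W(1,4) assms(2,3) unfolding W'_def by auto
  moreover have "hd W' = r" using W(1,2) unfolding W'_def by simp
  moreover have "r \<in> sub d ` V" using r assms(1) by (auto simp: connected_subs_def)
  moreover have "successively near W'"
  proof -
    have "successively near (replicate n (last W))" for n
    proof (induction n)
      case 0 then show ?case by simp
    next
      case (Suc n) then show ?case by (cases n) (auto simp: near_refl)
    qed
    moreover have "replicate n (last W) = [] \<or> hd (replicate n (last W)) = last W" for n
      by (cases n) auto
    ultimately show ?thesis unfolding W'_def using W(5) W(1)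
      by (metis successively_append_iff near_refl)
  qed
  moreover have "set W' = S" using W(1,3) unfolding W'_def by auto
  ultimately show ?thesis unfolding walks_def by blast
qed

lemma conn_count:
  assumes "finite V" "\<forall>v\<in>V. length v = D" "k \<ge> 1"
  shows "finite {S. connected_subs V d S \<and> card S = k} \<and>
         card {S. connected_subs V d S \<and> card S = k} \<le> card V * (3 ^ D) ^ (2 * (k - 1))"
proof -
  have C0: "finite (sub d ` V)" "\<forall>c\<in>sub d ` V. length c = D" using assms by (auto simp: sub_def)
  have sub: "{S. connected_subs V d S \<and> card S = k} \<subseteq> set ` walks (sub d ` V) (2 * (k - 1))"
    using conn_walk[OF _ _ assms(3,1)] by blast
  have w: "finite (walks (sub d ` V) (2 * (k - 1)))"
     "card (walks (sub d ` V) (2 * (k - 1))) \<le> card (sub d ` V) * (3 ^ D) ^ (2 * (k - 1))"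
    using walks_card[OF C0] by auto
  have "card {S. connected_subs V d S \<and> card S = k} \<le> card (set ` walks (sub d ` V) (2 * (k - 1)))"
    using sub w(1) by (intro card_mono) auto
  also have "\<dots> \<le> card (walks (sub d ` V) (2 * (k - 1)))" using w(1) by (rule card_image_le)
  also have "\<dots> \<le> card (sub d ` V) * (3 ^ D) ^ (2 * (k - 1))" by (rule w(2))
  also have "\<dots> \<le> card V * (3 ^ D) ^ (2 * (k - 1))" using assms(1) by (simp add: card_image_le)
  finally show ?thesis using sub w(1) finite_subset by blast
qed



lemma commute_pX:
  assumes "finite V" "i \<in> V"
  shows "commute V q (pX i) \<longleftrightarrow> \<not> snd (q i)"
proof -
  have "{v\<in>V. anticomm1 (q v) (pX i v)} = (if snd (q i) then {i} else {})"
    using assms(2) by (auto simp: pX_def anticomm1_def)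
  then show ?thesis by (simp add: commute_def)
qed

lemma commute_pZ:
  assumes "finite V" "i \<in> V"
  shows "commute V q (pZ i) \<longleftrightarrow> \<not> fst (q i)"
proof -
  have "{v\<in>V. anticomm1 (q v) (pZ i v)} = (if fst (q i) then {i} else {})"
    using assms(2) by (auto simp: pZ_def anticomm1_def)
  then show ?thesis by (simp add: commute_def)
qed

definition Fs :: "(nat \<Rightarrow> layer) \<Rightarrow> nat \<Rightarrow> pauli \<Rightarrow> (site \<times> nat) set" where
  "Fs U d s = {(i, t). t \<in> {1..d} \<and> i \<in> supp (rr U t s)}"

lemma survive_avoid:
  assumes "finite V" "valid_circuit V d U" "pauli_on V s" "B \<subseteq> locs V d"
    and "Pi_M V (Mset U B) s \<noteq> None"
  shows "B \<inter> Fs U d s = {}"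
proof (rule ccontr)
  assume "B \<inter> Fs U d s \<noteq> {}"
  then obtain i t where it: "(i, t) \<in> B" "t \<in> {1..d}" "i \<in> supp (rr U t s)"
    by (auto simp: Fs_def)
  have iV: "i \<in> V" using it(1) assms(4) by (auto simp: locs_def)
  have val: "\<And>j. 1 \<le> j \<Longrightarrow> j \<le> t \<Longrightarrow> valid_layer V (U j)"
    using assms(2) it(2) by (auto simp: valid_circuit_def)
  have allc: "\<forall>P\<in>Mset U B. commute V s P" using assms(5) by (simp add: Pi_M_def split: if_splits)
  have m1: "heis U t (pX i) \<in> Mset U B"
    unfolding Mset_def by (rule UnI1, rule CollectI, rule exI[of _ i], rule exI[of _ t], simp add: it(1))
  have m2: "heis U t (pZ i) \<in> Mset U B"
    unfolding Mset_def by (rule UnI2, rule CollectI, rule exI[of _ i], rule exI[of _ t], simp add: it(1))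
  define q where "q = rr U t s"
  have s: "heis U t q = s" unfolding q_def using heis_rr[OF val] by simp
  have c1: "commute V (heis U t q) (heis U t (pX i))" using allc m1 s by simp
  have c2: "commute V (heis U t q) (heis U t (pZ i))" using allc m2 s by simp
  have "commute V q (pX i)" using c1 heis_commute[OF assms(1) val] by simp
  then have "\<not> snd (q i)" using commute_pX[OF assms(1) iV] by simp
  moreover have "commute V q (pZ i)" using c2 heis_commute[OF assms(1) val] by simp
  then have "\<not> fst (q i)" using commute_pZ[OF assms(1) iV] by simp
  ultimately have "rr U t s i = z1" unfolding q_def by (cases "rr U t s i") simp
  then show False using it(3) by (simp add: supp_def)
qed

lemma Fs_card:
  assumes "finite V" "valid_circuit V d U" "pauli_on V s"
  shows "Fs U d s \<subseteq> locs V d \<and> card (Fs U d s) = (\<Sum>t\<in>{1..d}. card (supp (rr U t s)))"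
proof -
  have po: "\<And>t. t \<in> {1..d} \<Longrightarrow> pauli_on V (rr U t s)"
    using assms(2,3) by (intro rr_pauli_on) (auto simp: valid_circuit_def)
  have sV: "\<And>t. t \<in> {1..d} \<Longrightarrow> supp (rr U t s) \<subseteq> V" using po supp_sub by blast
  have e: "Fs U d s = (\<lambda>(t, i). (i, t)) ` (SIGMA t:{1..d}. supp (rr U t s))"
    by (auto simp: Fs_def)
  have inj: "inj_on (\<lambda>(t, i). (i, t)) (SIGMA t:{1..d}. supp (rr U t s))"
    by (auto simp: inj_on_def)
  have "card (Fs U d s) = card (SIGMA t:{1..d}. supp (rr U t s))"
    unfolding e using inj by (rule card_image)
  also have "\<dots> = (\<Sum>t\<in>{1..d}. card (supp (rr U t s)))"
  proof (rule card_SigmaI)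
    show "finite {1..d}" by simp
    show "\<forall>t\<in>{1..d}. finite (supp (rr U t s))" using sV assms(1) by (meson finite_subset)
  qed
  finally show ?thesis using sV by (auto simp: Fs_def locs_def)
qed

lemma surv_bound:
  fixes \<gamma> :: real
  assumes "finite V" "valid_circuit V d U" "pauli_on V s" "0 \<le> \<gamma>" "\<gamma> \<le> 1" "d \<ge> 1"
  shows "(1 - \<gamma>) ^ card (Fs U d s) \<le> (\<Sum>t\<in>{1..d}. ((1 - \<gamma>) ^ d) ^ card (supp (rr U t s)))"
proof -
  let ?m = "\<lambda>t. card (supp (rr U t s))"
  define \<mu> where "\<mu> = Min (?m ` {1..d})"
  have ne: "{1..d} \<noteq> {}" using assms(6) by auto
  have "\<mu> \<in> ?m ` {1..d}" unfolding \<mu>_def using ne by (intro Min_in) auto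
  then obtain t0 where t0: "t0 \<in> {1..d}" "?m t0 = \<mu>" by auto
  have le: "\<And>t. t \<in> {1..d} \<Longrightarrow> \<mu> \<le> ?m t" unfolding \<mu>_def by simp
  have "card {1..d} * \<mu> \<le> (\<Sum>t\<in>{1..d}. ?m t)" using sum_bounded_below[of "{1..d}" \<mu> ?m] le by simp
  then have "d * \<mu> \<le> card (Fs U d s)" using Fs_card[OF assms(1-3)] by simp
  then have "(1 - \<gamma>) ^ card (Fs U d s) \<le> (1 - \<gamma>) ^ (d * \<mu>)"
    using assms(4,5) by (intro power_decreasing) auto
  also have "\<dots> = ((1 - \<gamma>) ^ d) ^ ?m t0" using t0(2) by (simp add: power_mult)
  also have "\<dots> \<le> (\<Sum>t\<in>{1..d}. ((1 - \<gamma>) ^ d) ^ ?m t)"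
    using t0(1) assms(5) by (intro member_le_sum) auto
  finally show ?thesis .
qed



definition AS :: "site set \<Rightarrow> nat \<Rightarrow> nat \<Rightarrow> nat list set \<Rightarrow> pauli set" where
  "AS V d k S = {s\<in>PS V. supp s \<subseteq> \<Union> (cube V d ` S) \<and>
       real (card {c\<in>S. supp s \<inter> cube V d c \<noteq> {}}) \<ge> real k / 2}"

lemma rr_inj:
  assumes "\<And>j. 1 \<le> j \<Longrightarrow> j \<le> t \<Longrightarrow> valid_layer V (U j)"
  shows "inj (rr U t)"
  by (metis assms heis_rr injI)

lemma box_len: "v \<in> box D L \<Longrightarrow> length v = D" by (simp add: box_def)

lemma per_St:
  fixes x phi :: real
  assumes vc: "valid_circuit (box D L) d U" and d1: "d \<ge> 1" and t: "t \<in> {1..d}"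
    and cS: "connected_subs (box D L) d S" and kS: "card S = k" and x0: "0 \<le> x" and p1: "1 \<le> phi"
  shows "(\<Sum>s\<in>AS (box D L) d k S. x ^ card (supp (rr U t s)))
           \<le> (1 + 3 * (x * phi ^ (2 * 3 ^ D))) ^ (k * (6 * d) ^ D) / phi ^ k"
proof -
  let ?V = "box D L"
  let ?A = "AS ?V d k S"
  let ?K = "2 * 3 ^ D :: nat"
  have fV: "finite ?V" by (rule box_finite)
  have val: "\<And>j. 1 \<le> j \<Longrightarrow> j \<le> t \<Longrightarrow> valid_layer ?V (U j)"
    using vc t by (auto simp: valid_circuit_def)
  have td: "t \<le> d" using t by simp
  define R where "R = (\<Union>c\<in>S. {w\<in>?V. near c (sub d w)})"
  have Slen: "\<And>c. c \<in> S \<Longrightarrow> length c = D"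
    using cS by (auto simp: connected_subs_def sub_def box_def)
  have fS: "finite S" using cS fV by (auto simp: connected_subs_def intro: finite_subset)
  have fR: "finite R" unfolding R_def using fV by (rule finite_subset[rotated]) auto
  have cR: "card R \<le> k * (6 * d) ^ D"
  proof -
    have "card R \<le> (\<Sum>c\<in>S. card {w\<in>?V. near c (sub d w)})"
      unfolding R_def using fS by (rule card_UN_le)
    also have "\<dots> \<le> (\<Sum>c\<in>S. (6 * d) ^ D)"
      using cube_region_card[OF d1 Slen] by (intro sum_mono) auto
    also have "\<dots> = k * (6 * d) ^ D" using kS by simp
    finally show ?thesis .
  qed
  have img: "rr U t ` ?A \<subseteq> PS R"
  proof
    fix s' assume "s' \<in> rr U t ` ?A"
    then obtain s where s: "s \<in> ?A" "s' = rr U t s" by auto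
    have po: "pauli_on ?V s" using s(1) by (simp add: AS_def PS_def)
    have po': "pauli_on ?V s'" using rr_pauli_on[OF val po] s(2) by simp
    have "supp s' \<subseteq> R"
    proof
      fix w assume w: "w \<in> supp s'"
      have wV: "w \<in> ?V" using supp_sub[OF po'] w by auto
      have "w \<in> nbh t (supp s)" using rr_supp[of t "box D L" U s, OF val] w s(2) by auto
      then obtain u where u: "u \<in> supp s" "close t u w" by (auto simp: nbh_def)
      obtain c where c: "c \<in> S" "u \<in> cube ?V d c" using u(1) s(1) by (auto simp: AS_def)
      have "close d u w" using u(2) td by (rule close_mono)
      then have "near (sub d u) (sub d w)" using d1 close_sub_near by blast
      moreover have "sub d u = c" using c(2) by (simp add: cube_def)
      ultimately show "w \<in> R" using wV c(1) unfolding R_def by auto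
    qed
    then show "s' \<in> PS R" using po' unfolding PS_def pauli_on_def supp_def by auto
  qed
  have hk: "\<And>s'. s' \<in> rr U t ` ?A \<Longrightarrow> k \<le> ?K * card (supp s')"
  proof -
    fix s' assume "s' \<in> rr U t ` ?A"
    then obtain s where s: "s \<in> ?A" "s' = rr U t s" by auto
    have po: "pauli_on ?V s" using s(1) by (simp add: AS_def PS_def)
    have po': "pauli_on ?V s'" using rr_pauli_on[OF val po] s(2) by simp
    have fs': "finite (supp s')" using supp_sub[OF po'] fV finite_subset by auto
    define met where "met = {c\<in>S. supp s \<inter> cube ?V d c \<noteq> {}}"
    have k2: "k \<le> 2 * card met" using s(1) unfolding AS_def met_def by auto
    have hs: "heis U t s' = s" using heis_rr[OF val] s(2) by simp
    have msub: "met \<subseteq> (\<Union>w\<in>supp s'. {c. near (sub d w) c})"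
    proof
      fix c assume "c \<in> met"
      then obtain u where u: "u \<in> supp s" "u \<in> cube ?V d c" by (auto simp: met_def)
      have "u \<in> nbh t (supp s')" using heis_supp[of t "box D L" U s', OF val] hs u(1) by auto
      then obtain w where w: "w \<in> supp s'" "close t w u" by (auto simp: nbh_def)
      have "close d w u" using w(2) td by (rule close_mono)
      then have "near (sub d w) (sub d u)" using d1 close_sub_near by blast
      moreover have "sub d u = c" using u(2) by (simp add: cube_def)
      ultimately show "c \<in> (\<Union>w\<in>supp s'. {c. near (sub d w) c})" using w(1) by auto
    qed
    have each: "\<And>w. w \<in> supp s' \<Longrightarrow> finite {c. near (sub d w) c} \<and> card {c. near (sub d w) c} \<le> 3 ^ D"
    proof -
      fix w assume "w \<in> supp s'"
      then have "length (sub d w) = D" using supp_sub[OF po'] box_len by (auto simp: sub_def)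
      then show "finite {c. near (sub d w) c} \<and> card {c. near (sub d w) c} \<le> 3 ^ D"
        using near_card[of "sub d w"] by simp
    qed
    have "card met \<le> card (\<Union>w\<in>supp s'. {c. near (sub d w) c})"
      using msub fs' each by (intro card_mono) auto
    also have "\<dots> \<le> (\<Sum>w\<in>supp s'. card {c. near (sub d w) c})" using fs' by (rule card_UN_le)
    also have "\<dots> \<le> (\<Sum>w\<in>supp s'. 3 ^ D)" using each by (intro sum_mono) auto
    also have "\<dots> = card (supp s') * 3 ^ D" by simp
    finally have "card met \<le> card (supp s') * 3 ^ D" .
    then show "k \<le> ?K * card (supp s')" using k2 by (simp add: algebra_simps)
  qed
  have inj: "inj_on (rr U t) ?A" using rr_inj[OF val] by (simp add: inj_on_def inj_def)
  have "(\<Sum>s\<in>?A. x ^ card (supp (rr U t s))) = (\<Sum>s'\<in>rr U t ` ?A. x ^ card (supp s'))"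
    using sum.reindex[OF inj, of "\<lambda>s'. x ^ card (supp s')"] by (simp add: comp_def)
  also have "\<dots> \<le> (1 + 3 * (x * phi ^ ?K)) ^ card R / phi ^ k"
    using fR img x0 p1 hk by (rule tilt_sum)
  also have "\<dots> \<le> (1 + 3 * (x * phi ^ ?K)) ^ (k * (6 * d) ^ D) / phi ^ k"
  proof -
    have "1 \<le> 1 + 3 * (x * phi ^ ?K)" using x0 p1 by simp
    then have "(1 + 3 * (x * phi ^ ?K)) ^ card R \<le> (1 + 3 * (x * phi ^ ?K)) ^ (k * (6 * d) ^ D)"
      using cR by (intro power_increasing) auto
    then show ?thesis using p1 by (intro divide_right_mono) auto
  qed
  finally show ?thesis .
qed



lemma D_le_9pow: "real D \<le> 9 ^ D"
proof -
  have "D < 2 ^ D" by simp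
  also have "(2::nat) ^ D \<le> 9 ^ D" by (intro power_mono) auto
  finally have "D \<le> (9::nat) ^ D" by simp
  then show ?thesis by (metis of_nat_le_iff of_nat_numeral of_nat_power)
qed

lemma D_le_3pow: "real D \<le> 3 ^ D"
proof -
  have "D < 2 ^ D" by simp
  also have "(2::nat) ^ D \<le> 3 ^ D" by (intro power_mono) auto
  finally have "D \<le> (3::nat) ^ D" by simp
  then show ?thesis by (metis of_nat_le_iff of_nat_numeral of_nat_power)
qed

lemma exp4_ge9: "9 \<le> exp (4::real)"
proof -
  have "3 \<le> exp (2::real)" using exp_ge_add_one_self[of 2] by simp
  then have "3 * 3 \<le> exp (2::real) * exp 2" by (intro mult_mono) auto
  also have "\<dots> = exp 4" by (simp flip: exp_add)
  finally show ?thesis by simp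
qed

lemma num_part:
  fixes \<gamma> :: real and D d :: nat
  assumes D1: "1 \<le> D" and g0: "0 < \<gamma>" and g1: "\<gamma> \<le> 1"
    and hd: "real d > 100 * (3 ^ (2 * D) / \<gamma> + real D / \<gamma> * ln (real D / \<gamma>))"
  shows "ln 3 + (2 + 4 * real D) * (2 * 3 ^ D) + real D * ln (6 * real d) \<le> \<gamma> * real d"
proof -
  define a where "a = real D / \<gamma>"
  have a1: "1 \<le> a" unfolding a_def using D1 g0 g1 by (simp add: field_simps)
  have lna: "0 \<le> ln a" using a1 by simp
  have p9: "(3::real) ^ (2 * D) = 9 ^ D" by (simp add: power_mult)
  have hd': "real d > 100 * (9 ^ D / \<gamma> + a * ln a)" using hd unfolding p9 a_def by simp
  have gd: "\<gamma> * real d > 100 * (9 ^ D + real D * ln a)"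
  proof -
    have "\<gamma> * real d > \<gamma> * (100 * (9 ^ D / \<gamma> + a * ln a))" using hd' g0 by simp
    also have "\<gamma> * (100 * (9 ^ D / \<gamma> + a * ln a)) = 100 * (9 ^ D + real D * ln a)"
      using g0 unfolding a_def by (simp add: field_simps)
    finally show ?thesis .
  qed
  have DlnA: "0 \<le> real D * ln a" using lna by simp
  have A: "ln 3 + (2 + 4 * real D) * (2 * 3 ^ D) \<le> 13 * 9 ^ D"
  proof -
    have "ln (3::real) \<le> 3 - 1" by (rule ln_le_minus_one) simp
    also have "(3::real) - 1 \<le> 9 ^ D"
    proof -
      have "(9::real) ^ 1 \<le> 9 ^ D" using D1 by (intro power_increasing) auto
      then show ?thesis by simp
    qed
    finally have l3: "ln (3::real) \<le> 9 ^ D" .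
    have "(2 + 4 * real D) * (2 * 3 ^ D) \<le> (12 * real D) * 3 ^ D" using D1 by (simp add: algebra_simps)
    also have "\<dots> \<le> 12 * 3 ^ D * 3 ^ D" using D_le_3pow[of D] by (simp add: algebra_simps)
    also have "\<dots> = 12 * 9 ^ D" by (simp add: power_mult_distrib[symmetric])
    finally have c: "(2 + 4 * real D) * (2 * 3 ^ D) \<le> 12 * 9 ^ D" .
    show ?thesis using l3 c by linarith
  qed
  have al: "0 \<le> a * ln a" using a1 lna by simp
  have d_ge: "92 * a + 4 * (a * ln a) \<le> real d"
  proof -
    have "a \<le> 9 ^ D / \<gamma>" unfolding a_def using D_le_9pow[of D] g0 by (simp add: divide_right_mono)
    then have "92 * a + 4 * (a * ln a) \<le> 100 * (9 ^ D / \<gamma> + a * ln a)" using a1 al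
      unfolding distrib_left by linarith
    then show ?thesis using hd' by linarith
  qed
  have dpos: "0 < real d" using d_ge a1 al by linarith
  have B: "real D * ln (6 * real d) \<le> \<gamma> * real d / 2"
  proof -
    have e: "6 * real d = (24 * a) * (real d / (4 * a))" using a1 by (simp add: field_simps)
    have f1: "ln (6 * real d) = ln (24 * a) + ln (real d / (4 * a))"
      unfolding e using a1 dpos by (intro ln_mult_pos) auto
    have f2: "ln (real d / (4 * a)) \<le> real d / (4 * a) - 1"
      using a1 dpos by (intro ln_le_minus_one) simp
    have f3: "ln (24 * a) = ln 24 + ln a" using a1 by (intro ln_mult_pos) auto
    have f4: "ln (24::real) \<le> 24 - 1" by (rule ln_le_minus_one) simp
    have l1: "ln (6 * real d) \<le> 23 + ln a + (real d / (4 * a) - 1)" using f1 f2 f3 f4 by linarith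
    have "4 * a * (23 + ln a) \<le> real d" using d_ge by (simp add: algebra_simps)
    then have "23 + ln a \<le> real d / (4 * a)" using a1 by (simp add: field_simps)
    with l1 have "ln (6 * real d) \<le> real d / (2 * a)" by (simp add: field_simps)
    then have "real D * ln (6 * real d) \<le> real D * (real d / (2 * a))"
      by (intro mult_left_mono) auto
    also have "\<dots> = \<gamma> * real d / 2" unfolding a_def using g0 D1 by (simp add: field_simps)
    finally show ?thesis .
  qed
  have "0 \<le> (9::real) ^ D" by simp
  then show ?thesis using A B gd DlnA unfolding distrib_left by linarith
qed

lemma num_Q:
  fixes \<gamma> :: real and D d :: nat
  assumes D1: "1 \<le> D" and g0: "0 < \<gamma>" and g1: "\<gamma> \<le> 1"
    and hd: "real d > 100 * (3 ^ (2 * D) / \<gamma> + real D / \<gamma> * ln (real D / \<gamma>))"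
  shows "3 * ((1 - \<gamma>) ^ d * exp (2 + 4 * real D) ^ (2 * 3 ^ D)) * (6 * real d) ^ D \<le> 1"
proof -
  have N: "ln 3 + (2 + 4 * real D) * (2 * 3 ^ D) + real D * ln (6 * real d) \<le> \<gamma> * real d"
    by (rule num_part[OF assms])
  have dpos: "0 < real d"
  proof -
    have "(0::real) < 3 ^ (2 * D) / \<gamma>" using g0 by simp
    moreover have "0 \<le> real D / \<gamma> * ln (real D / \<gamma>)"
    proof -
      have "1 \<le> real D / \<gamma>" using D1 g0 g1 by (simp add: field_simps)
      then show ?thesis using g0 by simp
    qed
    ultimately have "0 < 100 * (3 ^ (2 * D) / \<gamma> + real D / \<gamma> * ln (real D / \<gamma>))"
      by (intro mult_pos_pos add_pos_nonneg) auto
    then show ?thesis using hd by linarith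
  qed
  have x: "(1 - \<gamma>) ^ d \<le> exp (- (\<gamma> * real d))"
  proof -
    have "(1 - \<gamma>) ^ d \<le> exp (- \<gamma>) ^ d"
      using g1 exp_ge_add_one_self[of "- \<gamma>"] by (intro power_mono) auto
    also have "\<dots> = exp (- (\<gamma> * real d))" by (simp add: exp_of_nat_mult[symmetric] algebra_simps)
    finally show ?thesis .
  qed
  have p: "exp (2 + 4 * real D) ^ (2 * 3 ^ D) = exp ((2 + 4 * real D) * (2 * 3 ^ D))"
    by (simp add: exp_of_nat_mult[symmetric] algebra_simps)
  have q: "(6 * real d) ^ D = exp (real D * ln (6 * real d))"
    using dpos by (simp add: exp_of_nat_mult)
  have t: "(3::real) = exp (ln 3)" by simp
  have "3 * ((1 - \<gamma>) ^ d * exp (2 + 4 * real D) ^ (2 * 3 ^ D)) * (6 * real d) ^ D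
        \<le> 3 * (exp (- (\<gamma> * real d)) * exp (2 + 4 * real D) ^ (2 * 3 ^ D)) * (6 * real d) ^ D"
    using x dpos by (intro mult_right_mono mult_left_mono) auto
  also have "\<dots> = exp (ln 3 + (2 + 4 * real D) * (2 * 3 ^ D) + real D * ln (6 * real d) - \<gamma> * real d)"
    unfolding p q by (subst t) (simp add: exp_add exp_diff exp_minus field_simps)
  also have "\<dots> \<le> exp 0" using N by simp
  finally show ?thesis by simp
qed



lemma sum_union_le:
  fixes f :: "'a \<Rightarrow> real"
  assumes "finite I" "\<forall>i\<in>I. finite (A i)" "\<forall>x. 0 \<le> f x"
  shows "sum f (\<Union>i\<in>I. A i) \<le> (\<Sum>i\<in>I. sum f (A i))"
  using assms
proof (induction I rule: finite_induct)
  case empty then show ?case by simp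
next
  case (insert i I)
  have fU: "finite (\<Union>i\<in>I. A i)" using insert by auto
  have fi: "finite (A i)" using insert by auto
  have "sum f (\<Union>j\<in>insert i I. A j) = sum f (A i \<union> (\<Union>j\<in>I. A j))" by simp
  also have "\<dots> = sum f (A i) + sum f (\<Union>j\<in>I. A j) - sum f (A i \<inter> (\<Union>j\<in>I. A j))"
    using fi fU by (rule sum_Un)
  also have "\<dots> \<le> sum f (A i) + sum f (\<Union>j\<in>I. A j)"
    using insert.prems(2) by (simp add: sum_nonneg)
  also have "\<dots> \<le> sum f (A i) + (\<Sum>j\<in>I. sum f (A j))" using insert by simp
  also have "\<dots> = (\<Sum>j\<in>insert i I. sum f (A j))" using insert.hyps by simp
  finally show ?case .
qed

lemma d_pos:
  fixes \<gamma> :: real and D d :: nat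
  assumes D1: "1 \<le> D" and g0: "0 < \<gamma>" and g1: "\<gamma> \<le> 1"
    and hd: "real d > 100 * (3 ^ (2 * D) / \<gamma> + real D / \<gamma> * ln (real D / \<gamma>))"
  shows "1 \<le> d"
proof -
  have "(0::real) < 3 ^ (2 * D) / \<gamma>" using g0 by simp
  moreover have "0 \<le> real D / \<gamma> * ln (real D / \<gamma>)"
  proof -
    have "1 \<le> real D / \<gamma>" using D1 g0 g1 by (simp add: field_simps)
    then show ?thesis using g0 by simp
  qed
  ultimately have "0 < 100 * (3 ^ (2 * D) / \<gamma> + real D / \<gamma> * ln (real D / \<gamma>))"
    by (intro mult_pos_pos add_pos_nonneg) auto
  then have "0 < real d" using hd by linarith
  then show ?thesis by simp
qed

lemma bnd_exp:
  fixes y :: real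
  assumes "0 \<le> y" "real N * y \<le> real k"
  shows "(1 + y) ^ N \<le> exp (real k)"
proof -
  have "(1 + y) ^ N \<le> exp y ^ N" using assms(1) by (intro power_mono) auto
  also have "\<dots> = exp (real N * y)" by (simp add: exp_of_nat_mult)
  also have "\<dots> \<le> exp (real k)" using assms(2) by simp
  finally show ?thesis .
qed

theorem lemma8:
  "\<exists>c::real. \<forall>(D::nat) (L::nat) (d::nat) (U::nat \<Rightarrow> layer) (\<gamma>::real) (k::nat).
     1 \<le> D \<longrightarrow> 1 \<le> L \<longrightarrow> 0 < \<gamma> \<longrightarrow> \<gamma> \<le> 1 \<longrightarrow> valid_circuit (box D L) d U \<longrightarrow>
     real d > c * (3 ^ (2 * D) / \<gamma> + real D / \<gamma> * ln (real D / \<gamma>)) \<longrightarrow>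
     noise_prob \<gamma> (box D L) d
        (\<lambda>B. \<exists>s\<in>T_set (box D L) d k. Pi_M (box D L) (Mset U B) s \<noteq> None)
       \<le> real (card (box D L) * d) * exp (- real k)"
proof (intro exI[of _ 100] allI impI)
  fix D L d :: nat and U :: "nat \<Rightarrow> layer" and \<gamma> :: real and k :: nat
  assume D1: "1 \<le> D" and L1: "1 \<le> L" and g0: "0 < \<gamma>" and g1: "\<gamma> \<le> 1"
    and vc: "valid_circuit (box D L) d U"
    and hd: "real d > 100 * (3 ^ (2 * D) / \<gamma> + real D / \<gamma> * ln (real D / \<gamma>))"
  let ?V = "box D L"
  let ?E = "\<lambda>B. \<exists>s\<in>T_set ?V d k. Pi_M ?V (Mset U B) s \<noteq> None"
  have fV: "finite ?V" by (rule box_finite)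
  have n1: "1 \<le> card ?V" using box_nonempty[OF L1, of D] fV
    by (metis card_0_eq empty_iff less_one not_le)
  have d1: "1 \<le> d" by (rule d_pos[OF D1 g0 g1 hd])
  have "1 * 1 \<le> card ?V * d" using n1 d1 by (rule mult_le_mono)
  then have RHS1: "1 \<le> real (card ?V * d)" by (metis mult_1 of_nat_1 of_nat_le_iff)
  show "noise_prob \<gamma> ?V d ?E \<le> real (card ?V * d) * exp (- real k)"
  proof (cases "k = 0")
    case True
    then show ?thesis using noise_prob_le1[OF fV, of \<gamma> d ?E] g0 g1 RHS1 by simp
  next
    case False
    then have k1: "1 \<le> k" by simp
    define x where "x = (1 - \<gamma>) ^ d"
    define phi where "phi = exp (2 + 4 * real D)"
    define K where "K = (2 * 3 ^ D :: nat)"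
    define T where "T = T_set ?V d k"
    define SS where "SS = {S. connected_subs ?V d S \<and> card S = k}"
    define f where "f = (\<lambda>s. \<Sum>t\<in>{1..d}. x ^ card (supp (rr U t s)))"
    have x0: "0 \<le> x" unfolding x_def using g1 by simp
    have p1: "1 \<le> phi" unfolding phi_def by simp
    have f0: "\<forall>s. 0 \<le> f s" unfolding f_def using x0 by (simp add: sum_nonneg)
    have fPS: "finite (PS ?V)" using PS_sum[OF fV] by simp
    have TPS: "T \<subseteq> PS ?V" unfolding T_def T_set_def PS_def by auto
    have fT: "finite T" using TPS fPS finite_subset by auto
    have cover: "T \<subseteq> (\<Union>S\<in>SS. AS ?V d k S)"
      unfolding T_def T_set_def SS_def AS_def PS_def by blast
    have lenV: "\<forall>v\<in>?V. length v = D" using box_len by blast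
    have SSc: "finite SS" "card SS \<le> card ?V * (3 ^ D) ^ (2 * (k - 1))"
      using conn_count[OF fV lenV k1, of d] unfolding SS_def by auto
    have fAS: "\<forall>S\<in>SS. finite (AS ?V d k S)"
      using fPS by (auto simp: AS_def intro: finite_subset)
    define Bnd where "Bnd = (1 + 3 * (x * phi ^ K)) ^ (k * (6 * d) ^ D) / phi ^ k"
    have step1: "noise_prob \<gamma> ?V d ?E \<le> (\<Sum>s\<in>T. noise_prob \<gamma> ?V d (\<lambda>B. B \<inter> Fs U d s = {}))"
    proof (rule noise_prob_union[OF fV fT])
      show "0 \<le> \<gamma>" "\<gamma> \<le> 1" using g0 g1 by auto
      fix B assume B: "B \<subseteq> locs ?V d" "?E B"
      then obtain s where s: "s \<in> T" "Pi_M ?V (Mset U B) s \<noteq> None" unfolding T_def by blast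
      have "pauli_on ?V s" using s(1) TPS by (auto simp: PS_def)
      then have "B \<inter> Fs U d s = {}" using survive_avoid[OF fV vc _ B(1) s(2)] by simp
      then show "\<exists>s\<in>T. B \<inter> Fs U d s = {}" using s(1) by blast
    qed
    also have "\<dots> = (\<Sum>s\<in>T. (1 - \<gamma>) ^ card (Fs U d s))"
    proof (rule sum.cong[OF refl])
      fix s assume "s \<in> T"
      then have "pauli_on ?V s" using TPS by (auto simp: PS_def)
      then have "Fs U d s \<subseteq> locs ?V d" using Fs_card[OF fV vc] by blast
      then show "noise_prob \<gamma> ?V d (\<lambda>B. B \<inter> Fs U d s = {}) = (1 - \<gamma>) ^ card (Fs U d s)"
        using noise_prob_avoid[OF fV] by blast
    qed
    also have "\<dots> \<le> (\<Sum>s\<in>T. f s)"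
    proof (rule sum_mono)
      fix s assume "s \<in> T"
      then have "pauli_on ?V s" using TPS by (auto simp: PS_def)
      then show "(1 - \<gamma>) ^ card (Fs U d s) \<le> f s"
        unfolding f_def x_def using surv_bound[OF fV vc _ _ g1 d1] g0 by simp
    qed
    also have "\<dots> \<le> sum f (\<Union>S\<in>SS. AS ?V d k S)"
      using cover f0 SSc(1) fAS by (intro sum_mono2) auto
    also have "\<dots> \<le> (\<Sum>S\<in>SS. sum f (AS ?V d k S))"
      using SSc(1) fAS f0 by (rule sum_union_le)
    also have "\<dots> = (\<Sum>S\<in>SS. \<Sum>t\<in>{1..d}. \<Sum>s\<in>AS ?V d k S. x ^ card (supp (rr U t s)))"
      unfolding f_def by (rule sum.cong[OF refl]) (rule sum.swap)
    also have "\<dots> \<le> (\<Sum>S\<in>SS. \<Sum>t\<in>{1..d}. Bnd)"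
    proof (intro sum_mono)
      fix S t assume S: "S \<in> SS" and t: "t \<in> {1..d}"
      have "connected_subs ?V d S" "card S = k" using S by (auto simp: SS_def)
      then show "(\<Sum>s\<in>AS ?V d k S. x ^ card (supp (rr U t s))) \<le> Bnd"
        unfolding Bnd_def K_def using per_St[OF vc d1 t _ _ x0 p1] by blast
    qed
    also have "\<dots> = real (card SS) * (real d * Bnd)" by simp
    finally have main: "noise_prob \<gamma> ?V d ?E \<le> real (card SS) * (real d * Bnd)" .
    have Q: "3 * (x * phi ^ K) * (6 * real d) ^ D \<le> 1"
      unfolding x_def phi_def K_def using num_Q[OF D1 g0 g1 hd] by simp
    have Bnd_le: "Bnd \<le> exp (real k) / phi ^ k"
    proof -
      have y0: "0 \<le> 3 * (x * phi ^ K)" using x0 p1 by simp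
      have "real (k * (6 * d) ^ D) * (3 * (x * phi ^ K)) = real k * (3 * (x * phi ^ K) * (6 * real d) ^ D)"
        by (simp add: algebra_simps)
      also have "\<dots> \<le> real k * 1" using Q by (intro mult_left_mono) auto
      finally have "(1 + 3 * (x * phi ^ K)) ^ (k * (6 * d) ^ D) \<le> exp (real k)"
        using bnd_exp[OF y0] by simp
      then show ?thesis unfolding Bnd_def using p1 by (intro divide_right_mono) auto
    qed
    have Bnd0: "0 \<le> Bnd" unfolding Bnd_def using x0 p1 by simp
    have cSS: "real (card SS) \<le> real (card ?V) * exp (4 * real D * real k)"
    proof -
      have "(3 ^ D) ^ (2 * (k - 1)) \<le> ((3::nat) ^ D) ^ (2 * k)" by (intro power_increasing) auto
      also have "\<dots> = 3 ^ (2 * (D * k))" by (simp only: power_mult[symmetric]) (simp add: ac_simps)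
      also have "\<dots> = 9 ^ (D * k)" by (simp add: power_mult)
      finally have "real ((3 ^ D) ^ (2 * (k - 1))) \<le> (9::real) ^ (D * k)"
        by (metis of_nat_le_iff of_nat_numeral of_nat_power)
      also have "\<dots> \<le> exp 4 ^ (D * k)" using exp4_ge9 by (intro power_mono) auto
      also have "\<dots> = exp (4 * real D * real k)" by (simp add: exp_of_nat_mult[symmetric] algebra_simps)
      finally have "real ((3 ^ D) ^ (2 * (k - 1))) \<le> exp (4 * real D * real k)" .
      then have "real (card ?V * (3 ^ D) ^ (2 * (k - 1))) \<le> real (card ?V) * exp (4 * real D * real k)"
        by (simp add: mult_left_mono)
      then show ?thesis using SSc(2) by (meson of_nat_le_iff order_trans)
    qed
    have "real (card SS) * (real d * Bnd) \<le> real (card ?V) * exp (4 * real D * real k) * (real d * (exp (real k) / phi ^ k))"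
      using cSS Bnd_le Bnd0 by (intro mult_mono) auto
    also have "\<dots> = real (card ?V * d) * exp (- real k)"
    proof -
      have "phi ^ k = exp ((2 + 4 * real D) * real k)" unfolding phi_def
        by (simp add: exp_of_nat_mult[symmetric] algebra_simps)
      then have E: "exp (4 * real D * real k) * (exp (real k) / phi ^ k) = exp (- real k)"
        by (simp add: exp_add[symmetric] exp_diff[symmetric] algebra_simps)
      have "real (card ?V) * exp (4 * real D * real k) * (real d * (exp (real k) / phi ^ k))
          = real (card ?V) * real d * (exp (4 * real D * real k) * (exp (real k) / phi ^ k))"
        by (simp only: mult_ac)
      also have "\<dots> = real (card ?V) * real d * exp (- real k)" by (simp only: E)
      finally show ?thesis by simp
    qed
    finally show ?thesis using main by linarith
  qed
qed


end
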